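(* Let $Z=\bigsqcup_n Z_n$ be a bounded degree simplicial complex, where $(Z_n)_{n\in\mathbb{N}}$ is a $1$-dimensional bounded degree topological expander. Then for each $n$ there is a subcomplex $\Gamma_n\leq Z_n$ such that $(\Gamma_n)_{n\in\mathbb{N}}$ is a graphical expander.
   Context: A simplicial complex is the topological realisation of an abstract simplicial complex $(S,\mathcal S)$; bounded degree means $S$ countable and $\max_s|\{t\ne s:\{s,t\}\in\mathcal S\}|<\infty$. $|Z|$ denotes the number of $0$-simplices; closed simplices are sets of points whose support lies in a fixed element of $\mathcal S$; $\Gamma\le Z$ means an injection of $0$-simplices sending simplices to simplices. For finite $Z$ and continuous $f:Z\to\mathbb R^q$, ${}_s\mathrm{Ov}(f)=\max_{z}|\{\sigma\text{ closed simplex of }Z: z\in f(\sigma)\}|$ and ${}_s\mathrm{TO}^q(Z)=\min_f {}_s\mathrm{Ov}(f)$. A $1$-dimensional $(\Delta,\varepsilon)$-topological expander is a family $(Z_n)$ of finite $1$-dimensional simplicial complexes with $|Z_n|\to\infty$, $\deg(Z_n)\le\Delta$ and ${}_s\mathrm{TO}^1(Z_n)\ge\varepsilon|Z_n|$ for all $n$. For a finite graph $\Gamma$ with $n$ vertices, the vertex boundary $\partial A$ of $A\subseteq V\Gamma$ is the set of vertices outside $A$ adjacent to $A$, and $h(\Gamma)=\min\{|\partial A|/|A|: 0<|A|\le n/2\}$. A family $(\Gamma_n)$ of finite graphs is a graphical expander if $|V\Gamma_n|\to\infty$, $\sup_n\deg(\Gamma_n)<\infty$ and $\inf_n h(\Gamma_n)>0$.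 *)

theory Defs
  imports "HOL-Analysis.Analysis"
begin

definition simplicial_complex :: "'a set \<Rightarrow> 'a set set \<Rightarrow> bool" where
  "simplicial_complex V S \<longleftrightarrow> finite V \<and>
     (\<forall>\<sigma>\<in>S. \<sigma> \<noteq> {} \<and> finite \<sigma> \<and> \<sigma> \<subseteq> V) \<and>
     (\<forall>\<sigma>\<in>S. \<forall>\<tau>. \<tau> \<noteq> {} \<and> \<tau> \<subseteq> \<sigma> \<longrightarrow> \<tau> \<in> S) \<and>
     (\<forall>v\<in>V. {v} \<in> S)"

definition one_dimensional :: "'a set set \<Rightarrow> bool" where
  "one_dimensional S \<longleftrightarrow> (\<forall>\<sigma>\<in>S. card \<sigma> \<le> 2) \<and> (\<exists>\<sigma>\<in>S. card \<sigma> = 2)"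

definition complex_degree :: "'a set \<Rightarrow> 'a set set \<Rightarrow> nat" where
  "complex_degree V S = Max (insert 0 ((\<lambda>s. card {t. t \<noteq> s \<and> {s, t} \<in> S}) ` V))"

text \<open>Topological realisation as a subspace of the product space 'a \<Rightarrow> real
  (barycentric coordinates); points are finitely supported probability vectors on V
  whose support is a simplex.\<close>
definition support :: "('a \<Rightarrow> real) \<Rightarrow> 'a set" where
  "support x = {v. x v \<noteq> 0}"

definition realisation :: "'a set \<Rightarrow> 'a set set \<Rightarrow> ('a \<Rightarrow> real) set" where
  "realisation V S = {x. (\<forall>v. x v \<ge> 0) \<and> support x \<in> S \<and> (\<Sum>v\<in>support x. x v) = 1}"

definition closed_simplex :: "'a set \<Rightarrow> 'a set set \<Rightarrow> 'a set \<Rightarrow> ('a \<Rightarrow> real) set" where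
  "closed_simplex V S \<sigma> = {x \<in> realisation V S. support x \<subseteq> \<sigma>}"

definition s_overlap :: "'a set \<Rightarrow> 'a set set \<Rightarrow> (('a \<Rightarrow> real) \<Rightarrow> real) \<Rightarrow> nat" where
  "s_overlap V S f = Sup ((\<lambda>z. card {\<sigma>\<in>S. z \<in> f ` closed_simplex V S \<sigma>}) ` UNIV)"

definition s_TO1 :: "'a set \<Rightarrow> 'a set set \<Rightarrow> nat" where
  "s_TO1 V S = Inf {s_overlap V S f | f. continuous_on (realisation V S) f}"

definition topological_expander_1 ::
  "(nat \<Rightarrow> 'a set) \<Rightarrow> (nat \<Rightarrow> 'a set set) \<Rightarrow> nat \<Rightarrow> real \<Rightarrow> bool" where
  "topological_expander_1 V S \<Delta> \<epsilon> \<longleftrightarrow>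
     (\<forall>n. simplicial_complex (V n) (S n) \<and> one_dimensional (S n)) \<and>
     filterlim (\<lambda>n. card (V n)) at_top sequentially \<and>
     (\<forall>n. complex_degree (V n) (S n) \<le> \<Delta>) \<and>
     (\<forall>n. real (s_TO1 (V n) (S n)) \<ge> \<epsilon> * real (card (V n)))"

definition finite_graph :: "'a set \<Rightarrow> 'a set set \<Rightarrow> bool" where
  "finite_graph W E \<longleftrightarrow> finite W \<and> (\<forall>e\<in>E. e \<subseteq> W \<and> card e = 2)"

definition graph_degree :: "'a set \<Rightarrow> 'a set set \<Rightarrow> nat" where
  "graph_degree W E = Max (insert 0 ((\<lambda>v. card {u. {v, u} \<in> E}) ` W))"

definition vertex_boundary :: "'a set \<Rightarrow> 'a set set \<Rightarrow> 'a set \<Rightarrow> 'a set" where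
  "vertex_boundary W E A = {v \<in> W - A. \<exists>u\<in>A. {u, v} \<in> E}"

text \<open>Vertex Cheeger constant h: the minimum of |\<partial>A|/|A| over admissible A.
  It is only used through "inf_n h(\<Gamma>_n) > 0", which we write out below as a uniform
  lower bound on all admissible ratios (an empty minimum imposes no constraint).\<close>
definition admissible :: "'a set \<Rightarrow> 'a set \<Rightarrow> bool" where
  "admissible W A \<longleftrightarrow> A \<subseteq> W \<and> 0 < card A \<and> real (card A) \<le> real (card W) / 2"

definition graphical_expander :: "(nat \<Rightarrow> 'a set) \<Rightarrow> (nat \<Rightarrow> 'a set set) \<Rightarrow> bool" where
  "graphical_expander W E \<longleftrightarrow>
     (\<forall>n. finite_graph (W n) (E n)) \<and>
     filterlim (\<lambda>n. card (W n)) at_top sequentially \<and>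
     (\<exists>D. \<forall>n. graph_degree (W n) (E n) \<le> D) \<and>
     (\<exists>c>0. \<forall>n. \<forall>A. admissible (W n) A \<longrightarrow>
        real (card (vertex_boundary (W n) (E n) A)) / real (card A) \<ge> c)"

text \<open>\<Gamma> \<le> Z: an injection of 0-simplices sending simplices to simplices
  (for a graph, the simplices are the vertices and the edges).\<close>
definition graph_le_complex :: "'a set \<Rightarrow> 'a set set \<Rightarrow> 'b set \<Rightarrow> 'b set set \<Rightarrow> bool" where
  "graph_le_complex W E V S \<longleftrightarrow>
     (\<exists>\<phi>. inj_on \<phi> W \<and> \<phi> ` W \<subseteq> V \<and> (\<forall>e\<in>E. \<phi> ` e \<in> S))"

end

theory Submission
  imports Defs
begin


definition Ei :: "'a set set \<Rightarrow> 'a set \<Rightarrow> 'a set set" where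
  "Ei S U = {e\<in>S. e \<subseteq> U \<and> card e = 2}"

definition cnt :: "'a set set \<Rightarrow> ('a \<Rightarrow> real) \<Rightarrow> 'a set \<Rightarrow> real \<Rightarrow> nat" where
  "cnt S p U z = card {e \<in> Ei S U. Min (p ` e) \<le> z \<and> z \<le> Max (p ` e)}"

lemma card2_fin: "card e = 2 \<Longrightarrow> finite e \<and> e \<noteq> {}"
  by (metis card.empty card.infinite zero_neq_numeral)

lemma layout:
  fixes V :: "'a set" and S :: "'a set set" and \<Delta> K :: nat and c :: real
  assumes fin: "finite V" and sub: "\<forall>\<sigma>\<in>S. \<sigma> \<subseteq> V"
    and deg: "\<forall>s\<in>V. card {t. t \<noteq> s \<and> {s,t} \<in> S} \<le> \<Delta>"
    and c: "c \<ge> 0"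
    and bad: "\<forall>U \<subseteq> V. K < card U \<longrightarrow> (\<exists>A. A \<subseteq> U \<and> 0 < card A \<and> 2 * card A \<le> card U
               \<and> real (card (vertex_boundary U (Ei S U) A)) < c * real (card A))"
  shows "U \<subseteq> V \<Longrightarrow> \<exists>p. inj_on p U \<and> p ` U \<subseteq> {a..<a + real (card U)} \<and>
           (\<forall>z. real (cnt S p U z) \<le> c * real \<Delta> * real (card U) + 2 ^ K)"
proof (induction "card U" arbitrary: U a rule: less_induct)
  case less
  have finU: "finite U" using less.prems fin finite_subset by blast
  have finEi: "finite (Ei S X)" if "X \<subseteq> U" for X
  proof -
    have "Ei S X \<subseteq> Pow U" using that by (auto simp: Ei_def)
    then show ?thesis using finU by (meson finite_Pow_iff finite_subset)
  qed
  show ?case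
  proof (cases "K < card U")
    case False
    obtain h where h: "bij_betw h U {0..<card U}" using ex_bij_betw_finite_nat[OF finU] by blast
    define p where "p = (\<lambda>v. a + real (h v))"
    have inj: "inj_on p U" using bij_betw_imp_inj_on[OF h] by (auto simp: inj_on_def p_def)
    have rng: "p ` U \<subseteq> {a..<a + real (card U)}" using h by (auto simp: p_def bij_betw_def)
    have "cnt S p U z \<le> 2 ^ K" for z
    proof -
      have "cnt S p U z \<le> card (Ei S U)" unfolding cnt_def
        by (rule card_mono[OF finEi]) auto
      also have "\<dots> \<le> card (Pow U)"
        by (rule card_mono) (use finU in \<open>auto simp: Ei_def\<close>)
      also have "\<dots> = 2 ^ card U" using finU by (simp add: card_Pow)
      also have "\<dots> \<le> 2 ^ K" using False by (simp add: power_increasing)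
      finally show ?thesis .
    qed
    then have "real (cnt S p U z) \<le> c * real \<Delta> * real (card U) + 2 ^ K" for z
    proof -
      have "real (cnt S p U z) \<le> 2 ^ K" using \<open>\<And>z. cnt S p U z \<le> 2 ^ K\<close>[of z]
        by (metis numeral_power_le_of_nat_cancel_iff of_nat_le_iff of_nat_numeral of_nat_power)
      moreover have "0 \<le> c * real \<Delta> * real (card U)" using c by simp
      ultimately show ?thesis by linarith
    qed
    then show ?thesis using inj rng by blast
  next
    case True
    then obtain A where AU: "A \<subseteq> U" and A0: "0 < card A" and A2: "2 * card A \<le> card U"
      and Ab: "real (card (vertex_boundary U (Ei S U) A)) < c * real (card A)"
      using bad less.prems by blast
    define B where "B = U - A"
    have finA: "finite A" using AU finU finite_subset by blast
    have cardU: "card U = card A + card B" unfolding B_def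
      using AU finA finU by (metis card_Diff_subset card_mono le_add_diff_inverse)
    have ltA: "card A < card U" using A0 A2 by linarith
    have ltB: "card B < card U" using A0 cardU by linarith
    obtain pA where pA: "inj_on pA A" "pA ` A \<subseteq> {a..<a + real (card A)}"
      "\<forall>z. real (cnt S pA A z) \<le> c * real \<Delta> * real (card A) + 2 ^ K"
      using less.hyps[OF ltA] AU less.prems by blast
    obtain pB where pB: "inj_on pB B" "pB ` B \<subseteq> {a + real (card A)..<a + real (card A) + real (card B)}"
      "\<forall>z. real (cnt S pB B z) \<le> c * real \<Delta> * real (card B) + 2 ^ K"
      using less.hyps[OF ltB, of "a + real (card A)"] less.prems by (auto simp: B_def)
    define p where "p = (\<lambda>v. if v \<in> A then pA v else pB v)"
    have inj: "inj_on p U"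
    proof (rule inj_onI)
      fix x y assume xy: "x \<in> U" "y \<in> U" "p x = p y"
      show "x = y"
      proof (cases "x \<in> A"; cases "y \<in> A")
        assume "x \<in> A" "y \<in> A" then show ?thesis using xy pA(1) by (auto simp: p_def inj_on_def)
      next
        assume "x \<notin> A" "y \<notin> A" then show ?thesis using xy pB(1) by (auto simp: p_def inj_on_def B_def)
      next
        assume a1: "x \<in> A" "y \<notin> A"
        then have "pA x < a + real (card A)" "pB y \<ge> a + real (card A)" using pA(2) pB(2) xy
          by (auto simp: B_def)
        then show ?thesis using xy a1 by (simp add: p_def)
      next
        assume a1: "x \<notin> A" "y \<in> A"
        then have "pA y < a + real (card A)" "pB x \<ge> a + real (card A)" using pA(2) pB(2) xy
          by (auto simp: B_def)
        then show ?thesis using xy a1 by (simp add: p_def)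
      qed
    qed
    have rng: "p ` U \<subseteq> {a..<a + real (card U)}"
      using pA(2) pB(2) cardU by (force simp: p_def B_def)
    define D where "D = vertex_boundary U (Ei S U) A"
    define Cr where "Cr = {e\<in>Ei S U. \<not> e \<subseteq> A \<and> \<not> e \<subseteq> B}"
    have finD: "finite D" using finU by (auto simp: D_def vertex_boundary_def)
    have Cr_sub: "Cr \<subseteq> (\<Union>b\<in>D. (\<lambda>t. {b,t}) ` {t. t \<noteq> b \<and> {b,t} \<in> S})"
    proof
      fix e assume e: "e \<in> Cr"
      then have eS: "e \<in> S" "e \<subseteq> U" "card e = 2" by (auto simp: Cr_def Ei_def)
      obtain u where u: "u \<in> e" "u \<notin> B" using e by (auto simp: Cr_def)
      obtain b where b: "b \<in> e" "b \<notin> A" using e by (auto simp: Cr_def)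
      have uA: "u \<in> A" using u eS B_def by auto
      have ub: "u \<noteq> b" using uA b by auto
      have e_eq: "e = {u, b}"
      proof -
        have "finite e" using eS(3) card2_fin by blast
        moreover have "{u, b} \<subseteq> e" using u(1) b(1) by blast
        moreover have "card e \<le> card {u, b}" using eS(3) ub by simp
        ultimately show ?thesis using card_seteq by metis
      qed
      have bD: "b \<in> D" using e_eq eS uA b ub by (auto simp: D_def vertex_boundary_def Ei_def)
      show "e \<in> (\<Union>b\<in>D. (\<lambda>t. {b,t}) ` {t. t \<noteq> b \<and> {b,t} \<in> S})"
        using bD e_eq eS ub by (auto simp: insert_commute)
    qed
    have cardCr: "card Cr \<le> \<Delta> * card D"
    proof -
      have "card Cr \<le> card (\<Union>b\<in>D. (\<lambda>t. {b,t}) ` {t. t \<noteq> b \<and> {b,t} \<in> S})"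
      proof (rule card_mono[OF _ Cr_sub])
        show "finite (\<Union>b\<in>D. (\<lambda>t. {b,t}) ` {t. t \<noteq> b \<and> {b,t} \<in> S})"
        proof (rule finite_UN_I[OF finD])
          fix b assume "b \<in> D"
          have "{t. t \<noteq> b \<and> {b,t} \<in> S} \<subseteq> V" using sub by auto
          then show "finite ((\<lambda>t. {b,t}) ` {t. t \<noteq> b \<and> {b,t} \<in> S})"
            using fin finite_subset by blast
        qed
      qed
      also have "\<dots> \<le> (\<Sum>b\<in>D. card ((\<lambda>t. {b,t}) ` {t. t \<noteq> b \<and> {b,t} \<in> S}))"
        by (rule card_UN_le[OF finD])
      also have "\<dots> \<le> (\<Sum>b\<in>D. \<Delta>)"
      proof (rule sum_mono)
        fix b assume bD: "b \<in> D"
        then have "b \<in> V" using less.prems by (auto simp: D_def vertex_boundary_def)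
        then show "card ((\<lambda>t. {b,t}) ` {t. t \<noteq> b \<and> {b,t} \<in> S}) \<le> \<Delta>"
        proof -
          have "finite {t. t \<noteq> b \<and> {b,t} \<in> S}"
          proof -
            have "{t. t \<noteq> b \<and> {b,t} \<in> S} \<subseteq> V" using sub by auto
            then show ?thesis using fin finite_subset by blast
          qed
          then have "card ((\<lambda>t. {b,t}) ` {t. t \<noteq> b \<and> {b,t} \<in> S}) \<le> card {t. t \<noteq> b \<and> {b,t} \<in> S}"
            by (rule card_image_le)
          also have "\<dots> \<le> \<Delta>" using deg \<open>b \<in> V\<close> by blast
          finally show ?thesis .
        qed
      qed
      finally show ?thesis by (simp add: mult.commute)
    qed
    have "real (cnt S p U z) \<le> c * real \<Delta> * real (card U) + 2 ^ K" for z
    proof -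
      define X where "X = {e \<in> Ei S U. Min (p ` e) \<le> z \<and> z \<le> Max (p ` e)}"
      define XA where "XA = {e \<in> Ei S A. Min (pA ` e) \<le> z \<and> z \<le> Max (pA ` e)}"
      define XB where "XB = {e \<in> Ei S B. Min (pB ` e) \<le> z \<and> z \<le> Max (pB ` e)}"
      have imA: "p ` e = pA ` e" if "e \<subseteq> A" for e using that by (auto simp: p_def)
      have imB: "p ` e = pB ` e" if "e \<subseteq> B" for e using that by (auto simp: p_def B_def)
      have Xsub: "X \<subseteq> XA \<union> XB \<union> Cr"
      proof
        fix e assume e: "e \<in> X"
        show "e \<in> XA \<union> XB \<union> Cr"
        proof (cases "e \<subseteq> A")
          case True then show ?thesis using e imA[OF True] by (auto simp: X_def XA_def Ei_def)
        next
          case F: False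
          show ?thesis
          proof (cases "e \<subseteq> B")
            case True then show ?thesis using e imB[OF True] by (auto simp: X_def XB_def Ei_def)
          next
            case False then show ?thesis using e F by (auto simp: X_def Cr_def)
          qed
        qed
      qed
      have finXA: "finite XA" using finEi[OF AU] by (auto simp: XA_def)
      have finXB: "finite XB" using finEi[of B] by (auto simp: XB_def B_def)
      have finCr: "finite Cr" using finEi[of U] by (auto simp: Cr_def)
      have "card X \<le> card (XA \<union> XB \<union> Cr)"
        by (rule card_mono[OF _ Xsub]) (use finXA finXB finCr in auto)
      also have "\<dots> \<le> card XA + card XB + card Cr"
        by (metis add_le_mono1 card_Un_le order_trans)
      finally have cX: "card X \<le> card XA + card XB + card Cr" .
      have disj: "XA = {} \<or> XB = {}"
      proof (rule ccontr)
        assume "\<not> (XA = {} \<or> XB = {})"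
        then obtain e e' where e: "e \<in> XA" and e': "e' \<in> XB" by blast
        have fe: "finite e" "e \<noteq> {}" "e \<subseteq> A" using e card2_fin by (auto simp: XA_def Ei_def)
        have fe': "finite e'" "e' \<noteq> {}" "e' \<subseteq> B" using e' card2_fin by (auto simp: XB_def Ei_def)
        have "Max (pA ` e) \<in> pA ` e" using Max_in[of "pA ` e"] fe by auto
        then have "Max (pA ` e) \<in> pA ` A" using fe(3) by blast
        then have m1: "Max (pA ` e) < a + real (card A)" using pA(2) by auto
        have "Min (pB ` e') \<in> pB ` e'" using Min_in[of "pB ` e'"] fe' by auto
        then have "Min (pB ` e') \<in> pB ` B" using fe'(3) by blast
        then have m2: "Min (pB ` e') \<ge> a + real (card A)" using pB(2) by auto
        show False using e e' m1 m2 by (auto simp: XA_def XB_def)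
      qed
      have cXA: "real (card XA) \<le> c * real \<Delta> * real (card A) + 2 ^ K"
        using pA(3) by (simp add: cnt_def XA_def)
      have cXB: "real (card XB) \<le> c * real \<Delta> * real (card B) + 2 ^ K"
        using pB(3) by (simp add: cnt_def XB_def)
      have cCr: "real (card Cr) \<le> c * real \<Delta> * real (card A)"
      proof -
        have "real (card Cr) \<le> real \<Delta> * real (card D)" using cardCr
          by (metis of_nat_le_iff of_nat_mult)
        also have "\<dots> \<le> real \<Delta> * (c * real (card A))"
          using Ab by (intro mult_left_mono) (auto simp: D_def)
        finally show ?thesis by (simp add: algebra_simps)
      qed
      have nn: "0 \<le> c * real \<Delta>" using c by simp
      have cU: "real (card U) = real (card A) + real (card B)" using cardU by simp
      have A2r: "2 * real (card A) \<le> real (card U)" using A2 by linarith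
      have "real (card X) \<le> c * real \<Delta> * real (card U) + 2 ^ K"
      proof -
        have rX: "real (card X) \<le> real (card XA) + real (card XB) + real (card Cr)"
          using cX by (metis of_nat_add of_nat_mono)
        show ?thesis
      proof (cases "XA = {}")
        case True
        have "c * real \<Delta> * real (card U) = c * real \<Delta> * real (card B) + c * real \<Delta> * real (card A)"
          using cU by (simp add: algebra_simps)
        then show ?thesis using rX True cXB cCr by simp
      next
        case False
        then have "XB = {}" using disj by blast
        then have "real (card X) \<le> c * real \<Delta> * real (card A) + 2 ^ K + c * real \<Delta> * real (card A)"
          using rX cXA cCr by simp
        also have "\<dots> = c * real \<Delta> * (2 * real (card A)) + 2 ^ K" by (simp add: algebra_simps)
        also have "\<dots> \<le> c * real \<Delta> * real (card U) + 2 ^ K"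
          using mult_left_mono[OF A2r nn] by simp
        finally show ?thesis .
      qed
      qed
      then show ?thesis by (simp add: cnt_def X_def)
    qed
    then show ?thesis using inj rng by blast
  qed
qed



lemma deg_le:
  assumes "finite V" "s \<in> V"
  shows "card {t. t \<noteq> s \<and> {s,t} \<in> S} \<le> complex_degree V S"
  unfolding complex_degree_def using assms by (intro Max_ge) auto

lemma overlap_bound:
  fixes V :: "'a set" and S :: "'a set set" and p :: "'a \<Rightarrow> real"
  assumes sc: "simplicial_complex V S" and od: "\<forall>\<sigma>\<in>S. card \<sigma> \<le> 2" and inj: "inj_on p V"
    and bnd: "\<forall>z. real (cnt S p V z) \<le> B"
  shows "real (s_TO1 V S) \<le> 1 + B"
proof -
  have finV: "finite V" and Sprop: "\<And>\<sigma>. \<sigma> \<in> S \<Longrightarrow> \<sigma> \<noteq> {} \<and> finite \<sigma> \<and> \<sigma> \<subseteq> V"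
    using sc by (auto simp: simplicial_complex_def)
  have finS: "finite S"
  proof -
    have "S \<subseteq> Pow V" using Sprop by auto
    then show ?thesis using finV by (meson finite_Pow_iff finite_subset)
  qed
  define f where "f = (\<lambda>x::'a\<Rightarrow>real. \<Sum>w\<in>V. x w * p w)"
  have cont: "continuous_on (realisation V S) f" unfolding f_def
    by (intro continuous_on_sum continuous_on_mult continuous_on_const
        continuous_on_subset[OF continuous_on_product_coordinates]) auto
  have le1: "s_TO1 V S \<le> s_overlap V S f" unfolding s_TO1_def
    by (rule cInf_lower) (use cont in \<open>auto intro: bdd_belowI[of _ 0]\<close>)
  have key: "Min (p ` \<sigma>) \<le> f x \<and> f x \<le> Max (p ` \<sigma>)" if \<sigma>: "\<sigma> \<in> S" and x: "x \<in> closed_simplex V S \<sigma>" for \<sigma> x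
  proof -
    have xr: "\<forall>v. x v \<ge> 0" "support x \<in> S" "(\<Sum>v\<in>support x. x v) = 1" "support x \<subseteq> \<sigma>"
      using x by (auto simp: closed_simplex_def realisation_def)
    have s: "\<sigma> \<noteq> {}" "finite \<sigma>" "\<sigma> \<subseteq> V" using Sprop[OF \<sigma>] by auto
    have z: "x w = 0" if "w \<notin> \<sigma>" for w using xr(4) that by (auto simp: support_def)
    have fx: "f x = (\<Sum>w\<in>\<sigma>. x w * p w)" unfolding f_def
      by (rule sum.mono_neutral_right[OF finV s(3)]) (auto simp: z)
    have s1: "(\<Sum>w\<in>\<sigma>. x w) = 1"
    proof -
      have "(\<Sum>w\<in>support x. x w) = (\<Sum>w\<in>\<sigma>. x w)"
        by (rule sum.mono_neutral_left[OF s(2) xr(4)]) (auto simp: support_def)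
      then show ?thesis using xr(3) by simp
    qed
    have "Min (p ` \<sigma>) = (\<Sum>w\<in>\<sigma>. x w * Min (p ` \<sigma>))" using s1 by (simp add: sum_distrib_right[symmetric])
    also have "\<dots> \<le> (\<Sum>w\<in>\<sigma>. x w * p w)"
      by (rule sum_mono, rule mult_left_mono) (use s xr(1) in auto)
    finally have m1: "Min (p ` \<sigma>) \<le> f x" using fx by simp
    have "(\<Sum>w\<in>\<sigma>. x w * p w) \<le> (\<Sum>w\<in>\<sigma>. x w * Max (p ` \<sigma>))"
      by (rule sum_mono, rule mult_left_mono) (use s xr(1) in auto)
    also have "\<dots> = Max (p ` \<sigma>)" using s1 by (simp add: sum_distrib_right[symmetric])
    finally have m2: "f x \<le> Max (p ` \<sigma>)" using fx by simp
    show ?thesis using m1 m2 by simp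
  qed
  have perz: "real (card {\<sigma>\<in>S. z \<in> f ` closed_simplex V S \<sigma>}) \<le> 1 + B" for z
  proof -
    define Y1 where "Y1 = (\<lambda>v. {v}) ` {v\<in>V. p v = z}"
    define Y2 where "Y2 = {e \<in> Ei S V. Min (p ` e) \<le> z \<and> z \<le> Max (p ` e)}"
    have sub: "{\<sigma>\<in>S. z \<in> f ` closed_simplex V S \<sigma>} \<subseteq> Y1 \<union> Y2"
    proof
      fix \<sigma> assume a: "\<sigma> \<in> {\<sigma>\<in>S. z \<in> f ` closed_simplex V S \<sigma>}"
      then have \<sigma>S: "\<sigma> \<in> S" by simp
      obtain x where x: "x \<in> closed_simplex V S \<sigma>" "z = f x" using a by auto
      have mm: "Min (p ` \<sigma>) \<le> z \<and> z \<le> Max (p ` \<sigma>)" using key[OF \<sigma>S x(1)] x(2) by simp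
      have s: "\<sigma> \<noteq> {}" "finite \<sigma>" "\<sigma> \<subseteq> V" using Sprop[OF \<sigma>S] by auto
      have "card \<sigma> \<noteq> 0" using s by simp
      then have "card \<sigma> = 1 \<or> card \<sigma> = 2" using od \<sigma>S by fastforce
      then show "\<sigma> \<in> Y1 \<union> Y2"
      proof
        assume "card \<sigma> = 1"
        then obtain v where v: "\<sigma> = {v}" by (rule card_1_singletonE)
        then show ?thesis using mm s by (auto simp: Y1_def)
      next
        assume "card \<sigma> = 2"
        then show ?thesis using mm s \<sigma>S by (auto simp: Y2_def Ei_def)
      qed
    qed
    have fin1: "finite {v\<in>V. p v = z}" using finV by simp
    have c1: "card Y1 \<le> 1"
    proof -
      have "card Y1 \<le> card {v\<in>V. p v = z}" unfolding Y1_def by (rule card_image_le[OF fin1])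
      also have "\<dots> \<le> 1" using card_le_Suc0_iff_eq[OF fin1] inj by (auto simp: inj_on_def)
      finally show ?thesis .
    qed
    have finY2: "finite Y2" using finS by (auto simp: Y2_def Ei_def)
    have "card {\<sigma>\<in>S. z \<in> f ` closed_simplex V S \<sigma>} \<le> card (Y1 \<union> Y2)"
      by (rule card_mono[OF _ sub]) (use fin1 finY2 in \<open>auto simp: Y1_def\<close>)
    also have "\<dots> \<le> card Y1 + card Y2" by (rule card_Un_le)
    also have "\<dots> \<le> 1 + cnt S p V z" using c1 by (simp add: cnt_def Y2_def)
    finally have "real (card {\<sigma>\<in>S. z \<in> f ` closed_simplex V S \<sigma>}) \<le> 1 + real (cnt S p V z)"
      by linarith
    then show ?thesis using bnd[rule_format, of z] by linarith
  qed
  define Y where "Y = (\<lambda>z. card {\<sigma>\<in>S. z \<in> f ` closed_simplex V S \<sigma>}) ` UNIV"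
  have finY: "finite Y"
  proof -
    have "Y \<subseteq> {..card S}" unfolding Y_def using finS by (auto intro!: card_mono)
    then show ?thesis using finite_subset by blast
  qed
  have "Y \<noteq> {}" by (simp add: Y_def)
  then have "s_overlap V S f \<in> Y" unfolding s_overlap_def Y_def[symmetric]
    using finY cSup_eq_Max Max_in by metis
  then obtain z where "s_overlap V S f = card {\<sigma>\<in>S. z \<in> f ` closed_simplex V S \<sigma>}"
    by (auto simp: Y_def)
  then have "real (s_overlap V S f) \<le> 1 + B" using perz by simp
  then show ?thesis using le1 by (meson of_nat_mono order_trans)
qed



lemma aux_lin:
  fixes x y t q :: real
  assumes "y \<le> x / 2" "t \<le> 1 + (y + q)" "x \<le> t"
  shows "x \<le> 2 * (1 + q)"
proof -
  have "x \<le> 1 + (x / 2 + q)" using assms by linarith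
  then show ?thesis by (simp add: field_simps)
qed

lemma exists_good:
  fixes V :: "'a set" and S :: "'a set set" and \<Delta> K :: nat and \<epsilon> :: real
  assumes sc: "simplicial_complex V S" and od: "one_dimensional S"
    and deg: "complex_degree V S \<le> \<Delta>" and eps: "\<epsilon> > 0"
    and to: "real (s_TO1 V S) \<ge> \<epsilon> * real (card V)"
    and big: "real (card V) > 2 * (1 + 2 ^ K) / \<epsilon>"
  shows "\<exists>U. U \<subseteq> V \<and> K < card U \<and> (\<forall>A. admissible U A \<longrightarrow>
           \<epsilon> / (2 * (real \<Delta> + 1)) \<le> real (card (vertex_boundary U (Ei S U) A)) / real (card A))"
proof (rule ccontr)
  define c where "c = \<epsilon> / (2 * (real \<Delta> + 1))"
  have c0: "c \<ge> 0" using eps by (simp add: c_def)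
  assume neg: "\<not> ?thesis"
  have bad: "\<forall>U \<subseteq> V. K < card U \<longrightarrow> (\<exists>A. A \<subseteq> U \<and> 0 < card A \<and> 2 * card A \<le> card U
               \<and> real (card (vertex_boundary U (Ei S U) A)) < c * real (card A))"
  proof (intro allI impI)
    fix U assume U: "U \<subseteq> V" "K < card U"
    then obtain A where A: "admissible U A"
      "\<not> c \<le> real (card (vertex_boundary U (Ei S U) A)) / real (card A)"
      using neg unfolding c_def by blast
    have A1: "A \<subseteq> U" "0 < card A" "real (card A) \<le> real (card U) / 2"
      using A(1) by (auto simp: admissible_def)
    have "2 * card A \<le> card U" using A1(3) by linarith
    moreover have "real (card (vertex_boundary U (Ei S U) A)) < c * real (card A)"
    proof -
      have h: "real (card (vertex_boundary U (Ei S U) A)) / real (card A) < c" using A(2) by linarith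
      have "0 < real (card A)" using A1(2) by simp
      from h pos_divide_less_eq[OF this] show ?thesis by (simp add: mult.commute)
    qed
    ultimately show "\<exists>A. A \<subseteq> U \<and> 0 < card A \<and> 2 * card A \<le> card U
               \<and> real (card (vertex_boundary U (Ei S U) A)) < c * real (card A)"
      using A1 by blast
  qed
  have finV: "finite V" and sub: "\<forall>\<sigma>\<in>S. \<sigma> \<subseteq> V" using sc by (auto simp: simplicial_complex_def)
  have degV: "\<forall>s\<in>V. card {t. t \<noteq> s \<and> {s,t} \<in> S} \<le> \<Delta>"
    using deg_le[OF finV] deg order_trans by blast
  obtain p where p: "inj_on p V" "\<forall>z. real (cnt S p V z) \<le> c * real \<Delta> * real (card V) + 2 ^ K"
    using layout[OF finV sub degV c0 bad, of V 0] by blast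
  have od2: "\<forall>\<sigma>\<in>S. card \<sigma> \<le> 2" using od by (simp add: one_dimensional_def)
  have ub: "real (s_TO1 V S) \<le> 1 + (c * real \<Delta> * real (card V) + 2 ^ K)"
    by (rule overlap_bound[OF sc od2 p(1) p(2)])
  have cD: "c * real \<Delta> \<le> \<epsilon> / 2"
    using eps by (simp add: c_def field_simps)
  have "c * real \<Delta> * real (card V) \<le> \<epsilon> / 2 * real (card V)"
    using cD by (intro mult_right_mono) auto
  moreover have "\<epsilon> / 2 * real (card V) = (\<epsilon> * real (card V)) / 2" by simp
  ultimately have "\<epsilon> * real (card V) \<le> 2 * (1 + 2 ^ K)"
    using aux_lin[OF _ ub to] by simp
  moreover have "2 * (1 + 2 ^ K) < real (card V) * \<epsilon>" using big eps by (simp add: pos_divide_less_eq)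
  ultimately show False by (simp add: mult.commute)
qed

theorem corollary1p5:
  fixes V :: "nat \<Rightarrow> 'a set" and S :: "nat \<Rightarrow> 'a set set"
    and \<Delta> :: nat and \<epsilon> :: real
  assumes "\<epsilon> > 0"
    and "topological_expander_1 V S \<Delta> \<epsilon>"
  shows "\<exists>(W :: nat \<Rightarrow> 'a set) (E :: nat \<Rightarrow> 'a set set).
           (\<forall>n. graph_le_complex (W n) (E n) (V n) (S n)) \<and> graphical_expander W E"
proof -
  note eps = assms(1)
  have sc: "\<And>n. simplicial_complex (V n) (S n)" and od: "\<And>n. one_dimensional (S n)"
    and lim: "filterlim (\<lambda>n. card (V n)) at_top sequentially"
    and deg: "\<And>n. complex_degree (V n) (S n) \<le> \<Delta>"
    and to: "\<And>n. real (s_TO1 (V n) (S n)) \<ge> \<epsilon> * real (card (V n))"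
    using assms(2) by (auto simp: topological_expander_1_def)
  have finV: "\<And>n. finite (V n)" using sc by (simp add: simplicial_complex_def)
  define c where "c = \<epsilon> / (2 * (real \<Delta> + 1))"
  have c0: "c > 0" using eps by (simp add: c_def)
  define good where "good = (\<lambda>n U. U \<subseteq> V n \<and> (\<forall>A. admissible U A \<longrightarrow>
           c \<le> real (card (vertex_boundary U (Ei (S n) U) A)) / real (card A)))"
  have ev: "eventually (\<lambda>n. \<exists>U. good n U \<and> K < card U) sequentially" for K
  proof -
    define r where "r = 2 * (1 + 2 ^ K) / \<epsilon>"
    have "eventually (\<lambda>n. Suc (nat \<lceil>r\<rceil>) \<le> card (V n)) sequentially"
      using lim by (simp add: filterlim_at_top)
    then show ?thesis
    proof (rule eventually_mono)
      fix n assume "Suc (nat \<lceil>r\<rceil>) \<le> card (V n)"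
      then have "real (Suc (nat \<lceil>r\<rceil>)) \<le> real (card (V n))" by (rule of_nat_mono)
      moreover have "r < real (Suc (nat \<lceil>r\<rceil>))" by linarith
      ultimately have "real (card (V n)) > r" by linarith
      then show "\<exists>U. good n U \<and> K < card U"
        using exists_good[OF sc[of n] od[of n] deg[of n] eps to[of n], of K] by (auto simp: good_def c_def r_def)
    qed
  qed
  have finG: "finite {U. good n U}" for n
  proof -
    have "{U. good n U} \<subseteq> Pow (V n)" by (auto simp: good_def)
    then show ?thesis using finV by (meson finite_Pow_iff finite_subset)
  qed
  have g0: "good n {}" for n by (auto simp: good_def admissible_def)
  define M where "M n = Max (card ` {U. good n U})" for n
  define W where "W n = (SOME U. good n U \<and> card U = M n)" for n
  have W: "good n (W n) \<and> card (W n) = M n" for n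
  proof -
    have "M n \<in> card ` {U. good n U}" unfolding M_def
      by (rule Max_in) (use finG g0 in auto)
    then have "\<exists>U. good n U \<and> card U = M n" by auto
    then show ?thesis unfolding W_def by (rule someI_ex)
  qed
  define E where "E n = Ei (S n) (W n)" for n
  have WV: "W n \<subseteq> V n" for n using W[of n] by (simp add: good_def)
  have le: "\<forall>n. graph_le_complex (W n) (E n) (V n) (S n)"
    unfolding graph_le_complex_def using WV by (intro allI exI[of _ id]) (auto simp: E_def Ei_def)
  have fg: "\<forall>n. finite_graph (W n) (E n)"
    using WV finV by (auto simp: finite_graph_def E_def Ei_def intro: finite_subset)
  have limW: "filterlim (\<lambda>n. card (W n)) at_top sequentially"
    unfolding filterlim_at_top
  proof
    fix K
    show "eventually (\<lambda>n. K \<le> card (W n)) sequentially"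
      using ev[of K]
    proof (rule eventually_mono)
      fix n assume "\<exists>U. good n U \<and> K < card U"
      then obtain U where U: "good n U" "K < card U" by blast
      have "card U \<le> M n" unfolding M_def by (rule Max_ge) (use finG U in auto)
      then show "K \<le> card (W n)" using W[of n] U by simp
    qed
  qed
  have degW: "graph_degree (W n) (E n) \<le> \<Delta>" for n
    unfolding graph_degree_def
  proof (rule Max.boundedI)
    show "finite (insert 0 ((\<lambda>v. card {u. {v, u} \<in> E n}) ` W n))"
      using WV finV finite_subset by blast
    show "insert 0 ((\<lambda>v. card {u. {v, u} \<in> E n}) ` W n) \<noteq> {}" by simp
    fix a assume "a \<in> insert 0 ((\<lambda>v. card {u. {v, u} \<in> E n}) ` W n)"
    then consider "a = 0" | v where "v \<in> W n" "a = card {u. {v, u} \<in> E n}" by auto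
    then show "a \<le> \<Delta>"
    proof cases
      case 1 then show ?thesis by simp
    next
      case 2
      have vV: "v \<in> V n" using 2 WV by blast
      have fin: "finite {t. t \<noteq> v \<and> {v,t} \<in> S n}"
      proof -
        have "{t. t \<noteq> v \<and> {v,t} \<in> S n} \<subseteq> V n" using sc[of n] by (auto simp: simplicial_complex_def)
        then show ?thesis using finV finite_subset by blast
      qed
      have "{u. {v, u} \<in> E n} \<subseteq> {t. t \<noteq> v \<and> {v,t} \<in> S n}"
        by (auto simp: E_def Ei_def)
      then have "card {u. {v, u} \<in> E n} \<le> card {t. t \<noteq> v \<and> {v,t} \<in> S n}"
        by (rule card_mono[OF fin])
      also have "\<dots> \<le> complex_degree (V n) (S n)" by (rule deg_le[OF finV vV])
      also have "\<dots> \<le> \<Delta>" by (rule deg)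
      finally show ?thesis using 2 by simp
    qed
  qed
  have exp: "\<forall>n. \<forall>A. admissible (W n) A \<longrightarrow>
        real (card (vertex_boundary (W n) (E n) A)) / real (card A) \<ge> c"
    using W by (auto simp: good_def E_def)
  have "graphical_expander W E"
    unfolding graphical_expander_def using fg limW degW exp c0 by blast
  then show ?thesis using le by blast
qed

end
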